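(* Let $\mathcal{H}$ be a separable Hilbert space with inner product $\langle\cdot,\cdot\rangle$ and norm $\|\cdot\|$, let $X\subset\mathcal{H}$ be closed and convex, and let $\Lambda,\Sigma>0$. Let $\phi:\mathcal{H}\to\mathbb{R}$ be twice continuously differentiable, with gradient $\nabla\phi(x)\in\mathcal{H}$ and Hessian $\nabla^2\phi(x):\mathcal{H}\to\mathcal{H}$, such that $$C_\phi:=\sup_{x\in X}\big(|\phi(x)|+\|\nabla\phi(x)\|+|||\nabla^2\phi(x)|||\big)<\infty,\qquad |||\nabla^2\phi(x)|||:=\sup\{\|\nabla^2\phi(x)w\|:\|w\|\le1\}.$$ For $\nu_0,\mu\in\mathcal{M}(X)$, let $\beta_{0,\star}\in\mathcal{M}(\mathfrak{C}\times\mathfrak{C})$ be optimal in the cone formulation of $\mathrm{HK}_{\Lambda,\Sigma}(\nu_0,\mu)^2$, with first marginal $\alpha_0\in\mathcal{M}_2(\mathfrak{C})$, $\mathfrak{h}\alpha_0\le\nu_0$, and second marginal $\alpha_\star\in\mathcal{M}_2(\mathfrak{C})$, $\mathfrak{h}\alpha_\star\le\mu$. Then $$\Big|\frac4\Sigma\Big(\int_X\phi\,d\mu-\int_X\phi\,d\nu_0\Big)-\Big(\mathfrak{F}_{0,\star,\phi}-\frac8\Sigma\int_X\phi\,d(\nu_0-\mathfrak{h}\alpha_0)\Big)\Big|\le C_\phi\,(6+16\Lambda/\Sigma)\,\mathrm{HK}_{\Lambda,\Sigma}(\nu_0,\mu)^2,$$ where $$\mathfrak{F}_{0,\star,\phi}=\frac4\Sigma\int_{\mathfrak{C}\times\mathfrak{C}}\Big[-2r_1^2\phi(x_1)+2r_1r_2\phi(x_1)\cos\big(\sqrt{\Sigma/(4\Lambda)}\|x_1-x_2\|\big)+r_1r_2\sqrt{4\Lambda/\Sigma}\,\langle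 S_{\Lambda,\Sigma}(x_1,x_2),\nabla\phi(x_1)\rangle\Big]d\beta_{0,\star},$$ with $S_{\Lambda,\Sigma}(x_1,x_2)=\frac{\sin(\sqrt{\Sigma/(4\Lambda)}\|x_1-x_2\|)}{\|x_1-x_2\|}(x_2-x_1)$ for $x_1\ne x_2$ and $S_{\Lambda,\Sigma}(x_1,x_1)=0$.
   Context: $\mathcal{M}(X)$: finite nonnegative Radon measures on $X$. Cone: $\mathfrak{C}=(X\times[0,\infty))/\sim$, where $(x_1,r_1)\sim(x_2,r_2)$ iff $r_1=r_2=0$ or ($r_1=r_2$, $x_1=x_2$); $[x,r]$ denotes classes, $\mathfrak{o}$ the vertex, identified with $[\bar x,0]$ for a fixed $\bar x\in X$. Cone distance: $\mathsf{d}_{\mathfrak{C},\Lambda,\Sigma}([x_1,r_1],[x_2,r_2])^2=\frac4\Sigma\big(r_1^2+r_2^2-2r_1r_2\cos(\min\{\sqrt{\Sigma/(4\Lambda)}\|x_1-x_2\|,\pi\})\big)$. $\mathcal{M}_2(\mathfrak{C})$: finite nonnegative Radon measures on $\mathfrak{C}$ with $\int\mathsf{d}_{\mathfrak{C},\Lambda,\Sigma}([x,r],\mathfrak{o})^2d\alpha<\infty$. For $\alpha\in\mathcal{M}_2(\mathfrak{C})$, $\mathfrak{h}\alpha\in\mathcal{M}(X)$ is given by $\int_X\psi\,d(\mathfrak{h}\alpha)=\int_{\mathfrak{C}}r^2\psi(x)\,d\alpha([x,r])$. The Hellinger–Kantorovich distance satisfies (cone formulation) $\mathrm{HK}_{\Lambda,\Sigma}(\mu_1,\mu_2)^2=\min\{\int_{\mathfrak{C}\times\mathfrak{C}}\mathsf{d}_{\mathfrak{C},\Lambda,\Sigma}^2\,d\beta+\frac4\Sigma\sum_{i=1}^2(\mu_i-\mathfrak{h}\beta_i)(X)\}$,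 the minimum over finite nonnegative Radon measures $\beta$ on $\mathfrak{C}\times\mathfrak{C}$ whose marginals $\beta_1,\beta_2$ lie in $\mathcal{M}_2(\mathfrak{C})$ with $\mathfrak{h}\beta_i\le\mu_i$; $\beta$ is optimal if it attains the minimum. *)

theory Defs
  imports "HOL-Analysis.Analysis"
begin

text \<open>Cone points [x,r] are represented by pairs (x,r) with r \<ge> 0; all quantities
  used below are invariant under the vertex identification.\<close>

definition cone_dist :: "real \<Rightarrow> real \<Rightarrow> ('a::real_normed_vector \<times> real) \<Rightarrow> ('a \<times> real) \<Rightarrow> real" where
  "cone_dist \<Lambda> \<Sigma> p q = sqrt (4 / \<Sigma> * ((snd p)\<^sup>2 + (snd q)\<^sup>2
     - 2 * snd p * snd q * cos (min (sqrt (\<Sigma> / (4 * \<Lambda>)) * norm (fst p - fst q)) pi)))"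

text \<open>Finite nonnegative (Borel, hence Radon) measures on X, as measures on the ambient space concentrated on X.\<close>
definition meas_on :: "'a::topological_space set \<Rightarrow> 'a measure \<Rightarrow> bool" where
  "meas_on X \<mu> \<longleftrightarrow> sets \<mu> = sets borel \<and> finite_measure \<mu> \<and> emeasure \<mu> (UNIV - X) = 0"

definition cone_meas :: "'a::topological_space set \<Rightarrow> ('a \<times> real) measure \<Rightarrow> bool" where
  "cone_meas X \<alpha> \<longleftrightarrow> sets \<alpha> = sets borel \<and> finite_measure \<alpha> \<and> emeasure \<alpha> (UNIV - X \<times> {0..}) = 0"

text \<open>M_2(C): finite second moment w.r.t. the vertex o (represented by (0,0)).\<close>
definition cone_M2 :: "real \<Rightarrow> real \<Rightarrow> 'a::real_normed_vector set \<Rightarrow> ('a \<times> real) measure \<Rightarrow> bool" where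
  "cone_M2 \<Lambda> \<Sigma> X \<alpha> \<longleftrightarrow> cone_meas X \<alpha> \<and> integrable \<alpha> (\<lambda>p. (cone_dist \<Lambda> \<Sigma> p (0, 0))\<^sup>2)"

definition hmap :: "('a::topological_space \<times> real) measure \<Rightarrow> 'a measure" where
  "hmap \<alpha> = distr (density \<alpha> (\<lambda>p. ennreal ((snd p)\<^sup>2))) borel fst"

definition meas_le :: "'a::topological_space measure \<Rightarrow> 'a measure \<Rightarrow> bool" where
  "meas_le \<mu> \<nu> \<longleftrightarrow> (\<forall>A\<in>sets borel. emeasure \<mu> A \<le> emeasure \<nu> A)"

definition marg1 :: "(('a::topological_space \<times> real) \<times> ('a \<times> real)) measure \<Rightarrow> ('a \<times> real) measure" where
  "marg1 \<beta> = distr \<beta> borel fst"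

definition marg2 :: "(('a::topological_space \<times> real) \<times> ('a \<times> real)) measure \<Rightarrow> ('a \<times> real) measure" where
  "marg2 \<beta> = distr \<beta> borel snd"

definition HK_admissible :: "real \<Rightarrow> real \<Rightarrow> 'a::real_normed_vector set \<Rightarrow> 'a measure \<Rightarrow> 'a measure
    \<Rightarrow> (('a \<times> real) \<times> ('a \<times> real)) measure \<Rightarrow> bool" where
  "HK_admissible \<Lambda> \<Sigma> X \<mu>1 \<mu>2 \<beta> \<longleftrightarrow> sets \<beta> = sets borel \<and> finite_measure \<beta>
     \<and> cone_M2 \<Lambda> \<Sigma> X (marg1 \<beta>) \<and> cone_M2 \<Lambda> \<Sigma> X (marg2 \<beta>)
     \<and> meas_le (hmap (marg1 \<beta>)) \<mu>1 \<and> meas_le (hmap (marg2 \<beta>)) \<mu>2"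

definition HK_cost :: "real \<Rightarrow> real \<Rightarrow> 'a::real_normed_vector set \<Rightarrow> 'a measure \<Rightarrow> 'a measure
    \<Rightarrow> (('a \<times> real) \<times> ('a \<times> real)) measure \<Rightarrow> real" where
  "HK_cost \<Lambda> \<Sigma> X \<mu>1 \<mu>2 \<beta> = (\<integral>pq. (cone_dist \<Lambda> \<Sigma> (fst pq) (snd pq))\<^sup>2 \<partial>\<beta>)
     + 4 / \<Sigma> * ((measure \<mu>1 X - measure (hmap (marg1 \<beta>)) X) + (measure \<mu>2 X - measure (hmap (marg2 \<beta>)) X))"

definition HK2 :: "real \<Rightarrow> real \<Rightarrow> 'a::real_normed_vector set \<Rightarrow> 'a measure \<Rightarrow> 'a measure \<Rightarrow> real" where
  "HK2 \<Lambda> \<Sigma> X \<mu>1 \<mu>2 = Inf {HK_cost \<Lambda> \<Sigma> X \<mu>1 \<mu>2 \<beta> | \<beta>. HK_admissible \<Lambda> \<Sigma> X \<mu>1 \<mu>2 \<beta>}"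

definition HK_optimal :: "real \<Rightarrow> real \<Rightarrow> 'a::real_normed_vector set \<Rightarrow> 'a measure \<Rightarrow> 'a measure
    \<Rightarrow> (('a \<times> real) \<times> ('a \<times> real)) measure \<Rightarrow> bool" where
  "HK_optimal \<Lambda> \<Sigma> X \<mu>1 \<mu>2 \<beta> \<longleftrightarrow> HK_admissible \<Lambda> \<Sigma> X \<mu>1 \<mu>2 \<beta>
     \<and> HK_cost \<Lambda> \<Sigma> X \<mu>1 \<mu>2 \<beta> = HK2 \<Lambda> \<Sigma> X \<mu>1 \<mu>2"

definition S_LS :: "real \<Rightarrow> real \<Rightarrow> 'a::real_normed_vector \<Rightarrow> 'a \<Rightarrow> 'a" where
  "S_LS \<Lambda> \<Sigma> x1 x2 = (if x1 = x2 then 0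
     else (sin (sqrt (\<Sigma> / (4 * \<Lambda>)) * norm (x1 - x2)) / norm (x1 - x2)) *\<^sub>R (x2 - x1))"

definition F_functional :: "real \<Rightarrow> real \<Rightarrow> ('a::real_inner \<Rightarrow> real) \<Rightarrow> ('a \<Rightarrow> 'a)
    \<Rightarrow> (('a \<times> real) \<times> ('a \<times> real)) measure \<Rightarrow> real" where
  "F_functional \<Lambda> \<Sigma> \<phi> grad \<beta> = 4 / \<Sigma> * (\<integral>pq. (case pq of ((x1, r1), (x2, r2)) \<Rightarrow>
      - 2 * r1\<^sup>2 * \<phi> x1 + 2 * r1 * r2 * \<phi> x1 * cos (sqrt (\<Sigma> / (4 * \<Lambda>)) * norm (x1 - x2))
      + r1 * r2 * sqrt (4 * \<Lambda> / \<Sigma>) * inner (S_LS \<Lambda> \<Sigma> x1 x2) (grad x1)) \<partial>\<beta>)"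

definition C_phi :: "'a set \<Rightarrow> ('a \<Rightarrow> real) \<Rightarrow> ('a::real_normed_vector \<Rightarrow> 'a) \<Rightarrow> ('a \<Rightarrow> 'a \<Rightarrow>\<^sub>L 'a) \<Rightarrow> real" where
  "C_phi X \<phi> grad hess = (SUP x\<in>X. \<bar>\<phi> x\<bar> + norm (grad x) + norm (hess x))"

end

theory Submission
  imports Defs
begin



lemma sin_lower3:
  fixes x :: real assumes "x \<ge> 0"
  shows "x - sin x \<le> x^3 / 6"
proof -
  have "\<bar>sin x - (\<Sum>m<3. sin_coeff m * x ^ m)\<bar> \<le> inverse (fact 3) * \<bar>x\<bar> ^ 3"
    by (rule Maclaurin_sin_bound)
  moreover have "(\<Sum>m<3. sin_coeff m * x ^ m) = x"
    by (simp add: eval_nat_numeral sin_coeff_def)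
  ultimately have "\<bar>sin x - x\<bar> \<le> x^3/6" using assms by (simp add: eval_nat_numeral)
  then show ?thesis by linarith
qed

lemma lin_help: "0 \<le> (S::real) \<Longrightarrow> 49 * x^2 \<le> 576 * S \<Longrightarrow> c = 1 - 2 * S \<Longrightarrow> x^2 \<le> 6 * (1 - c)"
  by (simp add: algebra_simps)

lemma one_minus_cos_lower:
  fixes x :: real assumes "0 \<le> x" "x \<le> pi"
  shows "x^2 \<le> 6 * (1 - cos x)"
proof -
  define y where "y = x / 2"
  have y0: "0 \<le> y" using assms by (simp add: y_def)
  have "pi \<le> 3.1415926535899" by (rule pi_approx(2))
  then have "y \<le> 79/50" using assms unfolding y_def by simp
  then have "y^2 \<le> (79/50)^2" using y0 by (intro power_mono) auto
  moreover have "(79/50::real)^2 \<le> 5/2" by (simp add: power2_eq_square)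
  ultimately have y2: "y^2 \<le> 5/2" by linarith
  have s: "y - y^3/6 \<le> sin y" using sin_lower3[OF y0] by simp
  have "y - y^3/6 = y * (1 - y^2/6)" by (simp add: algebra_simps power2_eq_square power3_eq_cube)
  also have "\<dots> \<ge> y * (7/12)" using y0 y2 by (intro mult_left_mono) auto
  finally have s2: "7/12 * y \<le> sin y" using s by simp
  have "(7/12 * y)^2 \<le> (sin y)^2" using s2 y0 by (intro power_mono) auto
  then have a: "49 * x^2 \<le> 576 * (sin y)^2" unfolding y_def by (simp add: power2_eq_square)
  have c: "cos x = 1 - 2 * sin y ^ 2" unfolding y_def using cos_double_sin[of "x/2"] by simp
  have "0 \<le> (sin y)^2" by simp
  then show ?thesis using a c lin_help by blast
qed



lemma abs_mul_le:
  fixes a b A B :: real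
  assumes "\<bar>a\<bar> \<le> A" "\<bar>b\<bar> \<le> B"
  shows "\<bar>a * b\<bar> \<le> A * B"
  using assms by (simp add: abs_mult mult_mono')

lemma core_far:
  fixes u v C j x f1 f2 s :: real
  assumes u: "u \<ge> 0" and v: "v \<ge> 0" and j: "j > 0"
    and b1: "\<bar>f1\<bar> \<le> C" and b2: "\<bar>f2\<bar> \<le> C" and bs: "\<bar>s\<bar> \<le> C * j"
  shows "\<bar>v^2 * f2 + u^2 * f1 - 2 * u * v * cos x * f1 - u * v * s\<bar>
         \<le> C * (6 + 4 * j^2) * (u^2 + v^2 + 2 * u * v)"
proof -
  have C: "C \<ge> 0" using b1 by linarith
  have w: "u * v \<ge> 0" using u v by simp
  have e1: "\<bar>v^2 * f2\<bar> \<le> v^2 * C" using abs_mul_le[of "v^2" "v^2" f2 C] b2 by simp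
  have e2: "\<bar>u^2 * f1\<bar> \<le> u^2 * C" using abs_mul_le[of "u^2" "u^2" f1 C] b1 by simp
  have e3: "\<bar>(2 * u * v) * (cos x * f1)\<bar> \<le> (2 * u * v) * (1 * C)"
    using abs_mul_le[of "2 * u * v" "2 * u * v" "cos x * f1" "1 * C"] abs_mul_le[of "cos x" "1" f1 C] b1 u v by simp
  have e4: "\<bar>(u * v) * s\<bar> \<le> (u * v) * (C * j)"
    using abs_mul_le[of "u * v" "u * v" s "C * j"] bs w by simp
  have "\<bar>v^2 * f2 + u^2 * f1 - 2 * u * v * cos x * f1 - u * v * s\<bar>
      \<le> \<bar>v^2 * f2\<bar> + \<bar>u^2 * f1\<bar> + \<bar>(2 * u * v) * (cos x * f1)\<bar> + \<bar>(u * v) * s\<bar>"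
    by (simp add: algebra_simps)
  also have "\<dots> \<le> C * (u^2 + v^2 + 2 * u * v) + C * (u * v * j)"
    using e1 e2 e3 e4 by (simp add: algebra_simps)
  also have "C * (u * v * j) \<le> C * (u * v * ((1 + j^2) / 2))"
  proof -
    have "j \<le> (1 + j^2)/2" using sum_squares_bound[of 1 j] by (simp add: power2_eq_square)
    then show ?thesis using C w by (intro mult_left_mono) auto
  qed
  finally have L: "\<bar>v^2 * f2 + u^2 * f1 - 2 * u * v * cos x * f1 - u * v * s\<bar>
      \<le> C * ((u^2 + v^2 + 2 * u * v) + u * v * ((1 + j^2) / 2))" by (simp add: algebra_simps)
  have "(u^2 + v^2 + 2 * u * v) + u * v * ((1 + j^2) / 2) \<le> (6 + 4 * j^2) * (u^2 + v^2 + 2 * u * v)"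
  proof -
    have q: "4 * (u * v) \<le> u^2 + v^2 + 2 * u * v" using sum_squares_bound[of u v] by (simp add: power2_eq_square algebra_simps)
    have "j^2 * (4 * (u * v)) \<le> j^2 * (u^2 + v^2 + 2 * u * v)" using q by (intro mult_left_mono) auto
    moreover have "0 \<le> u * (v * j^2)" using u v by simp
    ultimately show ?thesis using q w by (simp add: algebra_simps)
  qed
  then show ?thesis using L C by (smt (verit) mult_left_mono mult.assoc)
qed

lemma amgm8: fixes a b :: real shows "2 * (a * b) \<le> 8 * (a * a) + b^2 / 8"
proof -
  have h: "0 \<le> (8 * a - b)^2 / 8" by simp
  then show ?thesis by (simp add: power2_eq_square algebra_simps)
qed

lemma core_near:
  fixes u v C j x f1 f2 p s :: real
  assumes u: "u \<ge> 0" and v: "v \<ge> 0" and j: "j > 0" and x0: "x \<ge> 0" and xpi: "x \<le> pi"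
    and b1: "\<bar>f1\<bar> \<le> C" and b2: "\<bar>f2\<bar> \<le> C"
    and d1: "\<bar>f2 - f1\<bar> \<le> C * (j * x)"
    and d2: "\<bar>f2 - f1 - p\<bar> \<le> C * (j * x)^2"
    and d3: "\<bar>p - s\<bar> \<le> C * j * (x - sin x)"
  shows "\<bar>v^2 * f2 + u^2 * f1 - 2 * u * v * cos x * f1 - u * v * s\<bar>
         \<le> C * (6 + 4 * j^2) * (u^2 + v^2 - 2 * u * v * cos x)"
proof -
  have C: "C \<ge> 0" using b1 by linarith
  define w where "w = u * v"
  define cc where "cc = 1 - cos x"
  define A where "A = (v - u)^2"
  define G where "G = C * w * cc"
  define H where "H = C * w * cc * j^2"
  define m where "m = min u v"
  have w: "w \<ge> 0" using u v by (simp add: w_def)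
  have cc: "cc \<ge> 0" by (simp add: cc_def)
  have A: "A \<ge> 0" by (simp add: A_def)
  have G: "G \<ge> 0" using C w cc by (simp add: G_def)
  have H: "H \<ge> 0" using C w cc by (simp add: H_def)
  have m0: "m \<ge> 0" using u v by (simp add: m_def)
  have mw: "m^2 \<le> w" using u v unfolding m_def w_def power2_eq_square
    by (cases "u \<le> v") (auto intro: mult_left_mono mult_right_mono simp: min_def)
  have t1: "x^2 \<le> 6 * cc" using one_minus_cos_lower[OF x0 xpi] by (simp add: cc_def)
  have t2: "x - sin x \<le> 4 * cc"
  proof -
    have "x - sin x \<le> x^3/6" by (rule sin_lower3[OF x0])
    also have "x^3/6 = x * (x^2/6)" by (simp add: power2_eq_square power3_eq_cube)
    also have "\<dots> \<le> x * cc" using t1 x0 by (intro mult_left_mono) auto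
    also have "\<dots> \<le> 4 * cc" using xpi pi_less_4 cc by (intro mult_right_mono) auto
    finally show ?thesis .
  qed
  have ident: "v^2 * f2 + u^2 * f1 - 2 * u * v * cos x * f1 - u * v * s
      = (v - u) * (v * f2 - u * f1) + w * (f2 - f1 - p) + w * (2 * cc * f1) + w * (p - s)"
    by (simp add: w_def cc_def algebra_simps power2_eq_square)
  have rhs: "C * (6 + 4 * j^2) * (u^2 + v^2 - 2 * u * v * cos x)
      = 6 * (C * A) + 4 * (C * j^2 * A) + 12 * G + 8 * H"
    by (simp add: A_def G_def H_def w_def cc_def algebra_simps power2_eq_square)
  have CjA: "C * j^2 * A \<ge> 0" using C A by simp
  have B2: "\<bar>w * (f2 - f1 - p)\<bar> \<le> 6 * H"
  proof -
    have "\<bar>w * (f2 - f1 - p)\<bar> = w * \<bar>f2 - f1 - p\<bar>" using w by (simp add: abs_mult)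
    also have "\<dots> \<le> w * (C * (j * x)^2)" using d2 w by (intro mult_left_mono) auto
    also have "\<dots> = (C * w * j^2) * x^2" by (simp add: algebra_simps power2_eq_square)
    also have "\<dots> \<le> (C * w * j^2) * (6 * cc)" using t1 C w by (intro mult_left_mono) auto
    also have "\<dots> = 6 * H" by (simp add: H_def algebra_simps)
    finally show ?thesis .
  qed
  have B3: "\<bar>w * (2 * cc * f1)\<bar> \<le> 2 * G"
  proof -
    have "\<bar>w * (2 * cc * f1)\<bar> = (2 * w * cc) * \<bar>f1\<bar>" using w cc by (simp add: abs_mult)
    also have "\<dots> \<le> (2 * w * cc) * C" using b1 w cc by (intro mult_left_mono) auto
    also have "\<dots> = 2 * G" by (simp add: G_def algebra_simps)
    finally show ?thesis .
  qed
  have B4: "\<bar>w * (p - s)\<bar> \<le> 4 * G + H"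
  proof -
    have "\<bar>w * (p - s)\<bar> = w * \<bar>p - s\<bar>" using w by (simp add: abs_mult)
    also have "\<dots> \<le> w * (C * j * (x - sin x))" using d3 w by (intro mult_left_mono) auto
    also have "\<dots> = (C * w * j) * (x - sin x)" by (simp add: algebra_simps)
    also have "\<dots> \<le> (C * w * j) * (4 * cc)" using t2 C w j by (intro mult_left_mono) auto
    also have "\<dots> = (C * w * cc) * (4 * j)" by (simp add: algebra_simps)
    also have "\<dots> \<le> (C * w * cc) * (4 + j^2)"
    proof -
      have "4 * j \<le> 4 + j^2" using sum_squares_bound[of 2 j] by (simp add: power2_eq_square)
      then show ?thesis using C w cc by (intro mult_left_mono) auto
    qed
    also have "\<dots> = 4 * G + H" by (simp add: G_def H_def algebra_simps)
    finally show ?thesis .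
  qed
  have vf: "\<bar>v * f2 - u * f1\<bar> \<le> \<bar>v - u\<bar> * C + m * (C * (j * x))"
  proof (cases "u \<le> v")
    case True
    have "v * f2 - u * f1 = (v - u) * f2 + u * (f2 - f1)" by (simp add: algebra_simps)
    then have "\<bar>v * f2 - u * f1\<bar> \<le> \<bar>v - u\<bar> * \<bar>f2\<bar> + u * \<bar>f2 - f1\<bar>"
      using u by (simp add: abs_mult) (metis abs_mult abs_of_nonneg abs_triangle_ineq u)
    also have "\<dots> \<le> \<bar>v - u\<bar> * C + u * (C * (j * x))"
      using b2 d1 u by (intro add_mono mult_left_mono) auto
    finally show ?thesis using True by (simp add: m_def)
  next
    case False
    have "v * f2 - u * f1 = (v - u) * f1 + v * (f2 - f1)" by (simp add: algebra_simps)
    then have "\<bar>v * f2 - u * f1\<bar> \<le> \<bar>v - u\<bar> * \<bar>f1\<bar> + v * \<bar>f2 - f1\<bar>"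
      using v by (simp add: abs_mult) (metis abs_mult abs_of_nonneg abs_triangle_ineq v)
    also have "\<dots> \<le> \<bar>v - u\<bar> * C + v * (C * (j * x))"
      using b1 d1 v by (intro add_mono mult_left_mono) auto
    finally show ?thesis using False by (simp add: m_def)
  qed
  have B1: "\<bar>(v - u) * (v * f2 - u * f1)\<bar> \<le> 5 * (C * A) + 3/8 * H"
  proof -
    have "\<bar>(v - u) * (v * f2 - u * f1)\<bar> = \<bar>v - u\<bar> * \<bar>v * f2 - u * f1\<bar>" by (simp add: abs_mult)
    also have "\<dots> \<le> \<bar>v - u\<bar> * (\<bar>v - u\<bar> * C + m * (C * (j * x)))"
      using vf by (intro mult_left_mono) auto
    also have "\<dots> = C * A + C * (\<bar>v - u\<bar> * (m * j * x))"
      by (simp add: A_def algebra_simps power2_eq_square abs_mult_self_eq)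
    also have "C * (\<bar>v - u\<bar> * (m * j * x)) \<le> C * (4 * A + 3/8 * (w * cc * j^2))"
    proof -
      have am: "2 * (\<bar>v - u\<bar> * (m * j * x)) \<le> 8 * A + (m * j * x)^2 / 8"
      proof -
        have "A = \<bar>v - u\<bar> * \<bar>v - u\<bar>" by (simp add: A_def power2_eq_square)
        then show ?thesis using amgm8[of "\<bar>v - u\<bar>" "m * j * x"] by simp
      qed
      have "(m * j * x)^2 = m^2 * (j^2 * x^2)" by (simp add: power_mult_distrib)
      also have "\<dots> \<le> w * (j^2 * x^2)" using mw by (intro mult_right_mono) auto
      also have "\<dots> \<le> w * (j^2 * (6 * cc))" using w t1 by (intro mult_left_mono) auto
      finally have "(m * j * x)^2 \<le> 6 * (w * cc * j^2)" by (simp add: algebra_simps)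
      then have "\<bar>v - u\<bar> * (m * j * x) \<le> 4 * A + 3/8 * (w * cc * j^2)" using am by linarith
      then show ?thesis using C by (intro mult_left_mono) auto
    qed
    also have "C * (4 * A + 3/8 * (w * cc * j^2)) = 4 * (C * A) + 3/8 * H"
      by (simp add: H_def algebra_simps)
    finally show ?thesis by (simp add: mult.commute)
  qed
  have "\<bar>v^2 * f2 + u^2 * f1 - 2 * u * v * cos x * f1 - u * v * s\<bar>
      \<le> \<bar>(v - u) * (v * f2 - u * f1)\<bar> + \<bar>w * (f2 - f1 - p)\<bar> + \<bar>w * (2 * cc * f1)\<bar> + \<bar>w * (p - s)\<bar>"
    unfolding ident by (meson abs_triangle_ineq add_mono order_trans order_refl)
  also have "\<dots> \<le> (5 * (C * A) + 3/8 * H) + 6 * H + 2 * G + (4 * G + H)"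
    using B1 B2 B3 B4 by (intro add_mono)
  also have "\<dots> = 5 * (C * A) + 6 * G + 59/8 * H" by (simp add: algebra_simps)
  also have "\<dots> \<le> C * (6 + 4 * j^2) * (u^2 + v^2 - 2 * u * v * cos x)"
    unfolding rhs using CjA G H mult_nonneg_nonneg[OF C A] by linarith
  finally show ?thesis .
qed



lemma taylor_bounds:
  fixes X :: "'a::real_inner set" and \<phi> :: "'a \<Rightarrow> real" and grad :: "'a \<Rightarrow> 'a" and hess :: "'a \<Rightarrow> 'a \<Rightarrow>\<^sub>L 'a"
  assumes cX: "convex X"
    and dphi: "\<And>x. (\<phi> has_derivative (\<lambda>h. inner (grad x) h)) (at x)"
    and dgrad: "\<And>x. (grad has_derivative blinfun_apply (hess x)) (at x)"
    and bnd: "\<And>x. x \<in> X \<Longrightarrow> \<bar>\<phi> x\<bar> + norm (grad x) + norm (hess x) \<le> C"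
    and x1: "x1 \<in> X" and x2: "x2 \<in> X"
  shows "\<bar>\<phi> x2 - \<phi> x1\<bar> \<le> C * norm (x2 - x1)"
    and "\<bar>\<phi> x2 - \<phi> x1 - inner (grad x1) (x2 - x1)\<bar> \<le> C * (norm (x2 - x1))^2"
proof -
  have bphi: "\<bar>\<phi> x\<bar> \<le> C" and bg: "norm (grad x) \<le> C" and bh: "norm (hess x) \<le> C" if "x \<in> X" for x
    using bnd[OF that] norm_ge_zero[of "grad x"] norm_ge_zero[of "hess x"] by linarith+
  have "norm (\<phi> x2 - \<phi> x1) \<le> C * norm (x2 - x1)"
  proof (rule differentiable_bound[OF cX _ _ x2 x1])
    show "(\<phi> has_derivative (\<lambda>h. inner (grad x) h)) (at x within X)" if "x \<in> X" for x
      using dphi has_derivative_at_withinI by blast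
    show "onorm (\<lambda>h. inner (grad x) h) \<le> C" if "x \<in> X" for x
    proof (rule onorm_bound)
      show "0 \<le> C" using bg[OF that] norm_ge_zero[of "grad x"] by linarith
      show "norm (inner (grad x) h) \<le> C * norm h" for h
        using Cauchy_Schwarz_ineq2[of "grad x" h] mult_right_mono[OF bg[OF that] norm_ge_zero[of h]]
        by simp
    qed
  qed
  then show "\<bar>\<phi> x2 - \<phi> x1\<bar> \<le> C * norm (x2 - x1)" by simp
  have lip: "norm (grad y - grad x1) \<le> C * norm (y - x1)" if y: "y \<in> X" for y
  proof (rule differentiable_bound[OF cX _ _ y x1])
    show "(grad has_derivative blinfun_apply (hess x)) (at x within X)" if "x \<in> X" for x
      using dgrad has_derivative_at_withinI by blast
    show "onorm (blinfun_apply (hess x)) \<le> C" if "x \<in> X" for x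
      using bh[OF that] by (simp add: norm_blinfun.rep_eq)
  qed
  define g where "g = (\<lambda>y. \<phi> y - inner (grad x1) y)"
  have "norm (g x2 - g x1) \<le> (C * norm (x2 - x1)) * norm (x2 - x1)"
  proof (rule differentiable_bound[of "closed_segment x1 x2" g "\<lambda>y h. inner (grad y) h - inner (grad x1) h"])
    show "convex (closed_segment x1 x2)" by simp
    show "x2 \<in> closed_segment x1 x2" "x1 \<in> closed_segment x1 x2" by auto
    show "(g has_derivative (\<lambda>h. inner (grad y) h - inner (grad x1) h)) (at y within closed_segment x1 x2)" for y
    proof -
      have "(g has_derivative (\<lambda>h. inner (grad y) h - inner (grad x1) h)) (at y)"
        unfolding g_def
        by (intro has_derivative_diff dphi bounded_linear.has_derivative[OF bounded_linear_inner_right] has_derivative_ident)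
      then show ?thesis by (rule has_derivative_at_withinI)
    qed
    show "onorm (\<lambda>h. inner (grad y) h - inner (grad x1) h) \<le> C * norm (x2 - x1)"
      if y: "y \<in> closed_segment x1 x2" for y
    proof (rule onorm_bound)
      have yX: "y \<in> X" using closed_segment_subset[OF x1 x2 cX] y by auto
      have n: "norm (grad y - grad x1) \<le> C * norm (x2 - x1)"
      proof -
        have "C \<ge> 0" using bg[OF x1] norm_ge_zero[of "grad x1"] by linarith
        then have "C * norm (y - x1) \<le> C * norm (x2 - x1)"
          using segment_bound(1)[OF y] by (intro mult_left_mono) auto
        then show ?thesis using lip[OF yX] by linarith
      qed
      show "0 \<le> C * norm (x2 - x1)" using n norm_ge_zero order_trans by blast
      show "norm (inner (grad y) h - inner (grad x1) h) \<le> C * norm (x2 - x1) * norm h" for h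
      proof -
        have "norm (inner (grad y) h - inner (grad x1) h) = \<bar>inner (grad y - grad x1) h\<bar>"
          by (simp add: inner_diff_left)
        also have "\<dots> \<le> norm (grad y - grad x1) * norm h" by (rule Cauchy_Schwarz_ineq2)
        also have "\<dots> \<le> C * norm (x2 - x1) * norm h" using n by (intro mult_right_mono) auto
        finally show ?thesis .
      qed
    qed
  qed
  then show "\<bar>\<phi> x2 - \<phi> x1 - inner (grad x1) (x2 - x1)\<bar> \<le> C * (norm (x2 - x1))^2"
    by (simp add: g_def inner_diff_right power2_eq_square algebra_simps)
qed



lemma pointwise:
  fixes X :: "'a::real_inner set" and \<phi> :: "'a \<Rightarrow> real" and grad :: "'a \<Rightarrow> 'a" and hess :: "'a \<Rightarrow> 'a \<Rightarrow>\<^sub>L 'a"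
  assumes cX: "convex X" and L: "\<Lambda> > 0" and S: "\<Sigma> > 0"
    and dphi: "\<And>x. (\<phi> has_derivative (\<lambda>h. inner (grad x) h)) (at x)"
    and dgrad: "\<And>x. (grad has_derivative blinfun_apply (hess x)) (at x)"
    and bnd: "\<And>x. x \<in> X \<Longrightarrow> \<bar>\<phi> x\<bar> + norm (grad x) + norm (hess x) \<le> C"
    and x1: "x1 \<in> X" and x2: "x2 \<in> X" and r1: "r1 \<ge> 0" and r2: "r2 \<ge> 0"
  shows "4 / \<Sigma> * \<bar>r2^2 * \<phi> x2 + r1^2 * \<phi> x1
      - 2 * r1 * r2 * \<phi> x1 * cos (sqrt (\<Sigma> / (4 * \<Lambda>)) * norm (x1 - x2))
      - r1 * r2 * sqrt (4 * \<Lambda> / \<Sigma>) * inner (S_LS \<Lambda> \<Sigma> x1 x2) (grad x1)\<bar>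
    \<le> C * (6 + 16 * \<Lambda> / \<Sigma>) * (cone_dist \<Lambda> \<Sigma> (x1, r1) (x2, r2))^2"
proof -
  define k where "k = sqrt (\<Sigma> / (4 * \<Lambda>))"
  define j where "j = sqrt (4 * \<Lambda> / \<Sigma>)"
  define d where "d = norm (x1 - x2)"
  define x where "x = k * d"
  define f1 where "f1 = \<phi> x1"
  define f2 where "f2 = \<phi> x2"
  define p where "p = inner (grad x1) (x2 - x1)"
  define s where "s = j * inner (S_LS \<Lambda> \<Sigma> x1 x2) (grad x1)"
  have k: "k > 0" using L S by (simp add: k_def)
  have j: "j > 0" using L S by (simp add: j_def)
  have kj: "k * j = 1" using L S unfolding k_def j_def
    by (simp add: real_sqrt_mult[symmetric] field_simps)
  have j2: "j^2 = 4 * \<Lambda> / \<Sigma>" using L S by (simp add: j_def)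
  have d0: "d \<ge> 0" by (simp add: d_def)
  have x0: "x \<ge> 0" using k d0 by (simp add: x_def)
  have dx: "d = j * x" using kj by (simp add: x_def algebra_simps)
  have dnorm: "norm (x2 - x1) = d" by (simp add: d_def norm_minus_commute)
  have C: "C \<ge> 0" using bnd[OF x1] norm_ge_zero[of "grad x1"] norm_ge_zero[of "hess x1"] by linarith
  have bphi: "\<bar>\<phi> y\<bar> \<le> C" and bg: "norm (grad y) \<le> C" if "y \<in> X" for y
    using bnd[OF that] norm_ge_zero[of "grad y"] norm_ge_zero[of "hess y"] by linarith+
  note tb = taylor_bounds[OF cX dphi dgrad bnd x1 x2]
  have d1: "\<bar>f2 - f1\<bar> \<le> C * (j * x)" using tb(1) by (simp add: f1_def f2_def dnorm dx)
  have d2: "\<bar>f2 - f1 - p\<bar> \<le> C * (j * x)^2" using tb(2) by (simp add: f1_def f2_def p_def dnorm dx)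
  have pb: "\<bar>p\<bar> \<le> C * d"
  proof -
    have "\<bar>p\<bar> \<le> norm (grad x1) * norm (x2 - x1)" unfolding p_def by (rule Cauchy_Schwarz_ineq2)
    also have "\<dots> \<le> C * d" using bg[OF x1] by (simp add: dnorm d0 mult_right_mono)
    finally show ?thesis .
  qed
  have sx: "sin x \<le> x" using sin_x_le_x[OF x0] .
  have d3: "\<bar>p - s\<bar> \<le> C * j * (x - sin x)" and bs: "\<bar>s\<bar> \<le> C * j"
  proof -
    have "\<bar>p - s\<bar> \<le> C * j * (x - sin x) \<and> \<bar>s\<bar> \<le> C * j"
    proof (cases "x1 = x2")
      case True
      then have "p = 0" "s = 0" "x = 0" by (simp_all add: p_def s_def S_LS_def x_def d_def)
      then show ?thesis using C j by simp
    next
      case False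
      then have dpos: "d > 0" by (simp add: d_def)
      have s_eq: "s = j * (sin x / d) * p"
        using False by (simp add: s_def S_LS_def p_def x_def d_def k_def inner_commute)
      have "p - s = p * (j * (x - sin x) / d)"
      proof -
        have xpos: "x > 0" using dpos k by (simp add: x_def)
        show ?thesis using xpos j by (simp add: s_eq dx field_simps)
      qed
      then have "\<bar>p - s\<bar> = \<bar>p\<bar> * (j * (x - sin x) / d)" using j sx dpos by (simp add: abs_mult)
      also have "\<dots> \<le> (C * d) * (j * (x - sin x) / d)" using pb j sx dpos by (intro mult_right_mono) auto
      also have "\<dots> = C * j * (x - sin x)" using dpos by simp
      finally have A: "\<bar>p - s\<bar> \<le> C * j * (x - sin x)" .
      have "\<bar>s\<bar> = j * (\<bar>sin x\<bar> / d) * \<bar>p\<bar>" using j dpos by (simp add: s_eq abs_mult)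
      also have "\<dots> \<le> j * (1 / d) * (C * d)" using j dpos pb
        by (intro mult_mono) (auto simp: divide_right_mono)
      also have "\<dots> = C * j" using dpos by simp
      finally show ?thesis using A by simp
    qed
    then show "\<bar>p - s\<bar> \<le> C * j * (x - sin x)" "\<bar>s\<bar> \<le> C * j" by auto
  qed
  have E: "r2^2 * \<phi> x2 + r1^2 * \<phi> x1
      - 2 * r1 * r2 * \<phi> x1 * cos (sqrt (\<Sigma> / (4 * \<Lambda>)) * norm (x1 - x2))
      - r1 * r2 * sqrt (4 * \<Lambda> / \<Sigma>) * inner (S_LS \<Lambda> \<Sigma> x1 x2) (grad x1)
      = r2^2 * f2 + r1^2 * f1 - 2 * r1 * r2 * cos x * f1 - r1 * r2 * s"
    by (simp add: f1_def f2_def x_def k_def d_def s_def j_def algebra_simps)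
  define Q where "Q = r1^2 + r2^2 - 2 * r1 * r2 * cos (min x pi)"
  have Q0: "Q \<ge> 0"
  proof -
    have "Q = (r1 - r2)^2 + 2 * (r1 * r2) * (1 - cos (min x pi))" by (simp add: Q_def algebra_simps power2_eq_square)
    moreover have "0 \<le> 2 * (r1 * r2) * (1 - cos (min x pi))" using r1 r2 by simp
    ultimately show ?thesis by simp
  qed
  have cd: "(cone_dist \<Lambda> \<Sigma> (x1, r1) (x2, r2))^2 = 4 / \<Sigma> * Q"
    using Q0 S by (simp add: cone_dist_def Q_def x_def k_def d_def)
  have main: "\<bar>r2^2 * f2 + r1^2 * f1 - 2 * r1 * r2 * cos x * f1 - r1 * r2 * s\<bar> \<le> C * (6 + 4 * j^2) * Q"
  proof (cases "x \<le> pi")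
    case True
    then have "min x pi = x" by simp
    then show ?thesis unfolding Q_def
      using core_near[OF r1 r2 j x0 True bphi[OF x1, folded f1_def] bphi[OF x2, folded f2_def] d1 d2 d3] by simp
  next
    case False
    then have "min x pi = pi" by simp
    then show ?thesis unfolding Q_def
      using core_far[OF r1 r2 j bphi[OF x1, folded f1_def] bphi[OF x2, folded f2_def] bs, of x] by simp
  qed
  have "4 / \<Sigma> * \<bar>r2^2 * f2 + r1^2 * f1 - 2 * r1 * r2 * cos x * f1 - r1 * r2 * s\<bar> \<le> 4 / \<Sigma> * (C * (6 + 4 * j^2) * Q)"
    using main S by (intro mult_left_mono) auto
  also have "\<dots> = C * (6 + 16 * \<Lambda> / \<Sigma>) * (4 / \<Sigma> * Q)" by (simp add: j2 algebra_simps)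
  finally show ?thesis unfolding E cd .
qed



lemma bm_cong:
  assumes "sets M = sets M'" "f \<in> borel_measurable M'"
  shows "f \<in> borel_measurable M"
  using assms measurable_cong_sets[of M M' borel borel] by simp

lemma integral_mono_measure_real:
  fixes M N :: "'a measure" and h :: "'a \<Rightarrow> real"
  assumes sets: "sets N = sets M" and le: "N \<le> M" and fin: "finite_measure M"
    and h: "h \<in> borel_measurable M" and h0: "\<And>x. 0 \<le> h x" and hb: "\<And>x. h x \<le> B"
  shows "(\<integral>x. h x \<partial>N) \<le> (\<integral>x. h x \<partial>M)"
proof -
  have hN: "h \<in> borel_measurable N" using bm_cong[OF sets h] .
  have intM: "integrable M h"
    using finite_measure.integrable_const_bound[OF fin, of h B] h h0 hb by (auto intro!: always_eventually)
  have "(\<integral>x. h x \<partial>N) = enn2real (\<integral>\<^sup>+ x. ennreal (h x) \<partial>N)"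
    using hN h0 by (intro integral_eq_nn_integral) auto
  also have "\<dots> \<le> enn2real (\<integral>\<^sup>+ x. ennreal (h x) \<partial>M)"
  proof (rule enn2real_mono)
    show "(\<integral>\<^sup>+ x. ennreal (h x) \<partial>N) \<le> (\<integral>\<^sup>+ x. ennreal (h x) \<partial>M)"
      by (rule nn_integral_mono_measure[OF sets le])
    show "(\<integral>\<^sup>+ x. ennreal (h x) \<partial>M) < top"
      using intM h0 by (simp add: nn_integral_eq_integral)
  qed
  also have "\<dots> = (\<integral>x. h x \<partial>M)"
    using h h0 by (intro integral_eq_nn_integral[symmetric]) auto
  finally show ?thesis .
qed

lemma deficit_bound:
  fixes M N :: "'a::topological_space measure" and f :: "'a \<Rightarrow> real"
  assumes sM: "sets M = sets borel" and sN: "sets N = sets borel"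
    and fM: "finite_measure M" and fN: "finite_measure N"
    and le: "meas_le N M" and nullM: "emeasure M (UNIV - X) = 0" and Xb: "X \<in> sets borel"
    and f: "f \<in> borel_measurable borel" and fb: "\<And>x. x \<in> X \<Longrightarrow> \<bar>f x\<bar> \<le> C"
  shows "\<bar>(\<integral>x. f x \<partial>M) - (\<integral>x. f x \<partial>N)\<bar> \<le> C * (measure M X - measure N X)"
proof -
  have spM: "space M = UNIV" using sets_eq_imp_space_eq[OF sM] by simp
  have spN: "space N = UNIV" using sets_eq_imp_space_eq[OF sN] by simp
  have UX: "UNIV - X \<in> sets borel" using Xb by auto
  have nullN: "emeasure N (UNIV - X) = 0"
    using le UX nullM unfolding meas_le_def by (metis le_zero_eq)
  have aeM: "AE x in M. x \<in> X"
    by (rule AE_I'[of "UNIV - X"]) (auto simp: null_sets_def sM nullM UX spM)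
  have aeN: "AE x in N. x \<in> X"
    by (rule AE_I'[of "UNIV - X"]) (auto simp: null_sets_def sN nullN UX spN)
  show ?thesis
  proof (cases "X = {}")
    case True
    have "(\<integral>x. f x \<partial>M) = 0" using aeM True by (intro integral_eq_zero_AE) auto
    moreover have "(\<integral>x. f x \<partial>N) = 0" using aeN True by (intro integral_eq_zero_AE) auto
    ultimately show ?thesis using True by simp
  next
    case False
    then obtain x0 where "x0 \<in> X" by auto
    then have C: "C \<ge> 0" using fb[of x0] by linarith
    define g where "g = (\<lambda>x. if x \<in> X then f x else 0)"
    have g: "g \<in> borel_measurable borel" unfolding g_def using f Xb by measurable
    have gM: "g \<in> borel_measurable M" using bm_cong[OF sM g] .
    have gN: "g \<in> borel_measurable N" using bm_cong[OF sN g] .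
    have gb: "\<bar>g x\<bar> \<le> C" for x using fb C by (simp add: g_def)
    have eM: "(\<integral>x. f x \<partial>M) = (\<integral>x. g x \<partial>M)" using aeM by (intro integral_cong_AE) (auto simp: g_def bm_cong[OF sM f] gM[unfolded g_def])
    have eN: "(\<integral>x. f x \<partial>N) = (\<integral>x. g x \<partial>N)" using aeN by (intro integral_cong_AE) (auto simp: g_def bm_cong[OF sN f] gN[unfolded g_def])
    have intgM: "integrable M g"
      using finite_measure.integrable_const_bound[OF fM, of g C] gM gb by (auto intro!: always_eventually)
    have intgN: "integrable N g"
      using finite_measure.integrable_const_bound[OF fN, of g C] gN gb by (auto intro!: always_eventually)
    have NM: "N \<le> M"
      unfolding le_measure_iff using spM spN sM sN le
      by (auto simp: meas_le_def le_fun_def emeasure_notin_sets)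
    have sNM: "sets N = sets M" using sM sN by simp
    have mM: "measure M UNIV = measure M X"
    proof -
      have "measure M (UNIV - X) = measure M UNIV - measure M X"
        using finite_measure.finite_measure_Diff[OF fM, of UNIV X] sM Xb spM by (metis sets.top subset_UNIV)
      moreover have "measure M (UNIV - X) = 0" using nullM by (simp add: measure_def)
      ultimately show ?thesis by simp
    qed
    have mN: "measure N UNIV = measure N X"
    proof -
      have "measure N (UNIV - X) = measure N UNIV - measure N X"
        using finite_measure.finite_measure_Diff[OF fN, of UNIV X] sN Xb spN by (metis sets.top subset_UNIV)
      moreover have "measure N (UNIV - X) = 0" using nullN by (simp add: measure_def)
      ultimately show ?thesis by simp
    qed
    have cM: "integrable M (\<lambda>x. C)" by (rule finite_measure.integrable_const[OF fM])
    have cN: "integrable N (\<lambda>x. C)" by (rule finite_measure.integrable_const[OF fN])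
    have A1: "(\<integral>x. C - g x \<partial>N) \<le> (\<integral>x. C - g x \<partial>M)"
      by (rule integral_mono_measure_real[OF sNM NM fM _ _, of _ "2 * C"])
         (use gM gb in \<open>auto simp: abs_le_iff\<close>)
    have A2: "(\<integral>x. C + g x \<partial>N) \<le> (\<integral>x. C + g x \<partial>M)"
      by (rule integral_mono_measure_real[OF sNM NM fM _ _, of _ "2 * C"])
         (use gM gb in \<open>auto simp: abs_le_iff\<close>, metis abs_le_iff add.commute gb le_add_same_cancel2 neg_le_iff_le add_le_cancel_left add_le_mono diff_ge_0_iff_ge minus_add_cancel)
    have i1: "(\<integral>x. C - g x \<partial>M) = C * measure M X - (\<integral>x. g x \<partial>M)"
      using intgM cM mM spM by (simp add: integral_diff)
    have i2: "(\<integral>x. C - g x \<partial>N) = C * measure N X - (\<integral>x. g x \<partial>N)"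
      using intgN cN mN spN by (simp add: integral_diff)
    have i3: "(\<integral>x. C + g x \<partial>M) = C * measure M X + (\<integral>x. g x \<partial>M)"
      using intgM cM mM spM by (simp add: integral_add)
    have i4: "(\<integral>x. C + g x \<partial>N) = C * measure N X + (\<integral>x. g x \<partial>N)"
      using intgN cN mN spN by (simp add: integral_add)
    show ?thesis unfolding eM eN using A1 A2 i1 i2 i3 i4 by (simp add: algebra_simps abs_le_iff)
  qed
qed



lemma fst_bm[measurable]: "fst \<in> borel_measurable (borel :: ('x::topological_space \<times> 'y::topological_space) measure)"
  by (rule borel_measurable_continuous_onI) (intro continuous_on_fst continuous_on_id)

lemma snd_bm[measurable]: "snd \<in> borel_measurable (borel :: ('x::topological_space \<times> 'y::topological_space) measure)"
  by (rule borel_measurable_continuous_onI) (intro continuous_on_snd continuous_on_id)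

lemma sin_bm[measurable]: "(sin :: real \<Rightarrow> real) \<in> borel_measurable borel"
  by (rule borel_measurable_continuous_onI) (intro continuous_intros)

lemma cos_bm[measurable]: "(cos :: real \<Rightarrow> real) \<in> borel_measurable borel"
  by (rule borel_measurable_continuous_onI) (intro continuous_intros)

lemma sqrt_bm[measurable]: "sqrt \<in> borel_measurable borel"
  by (rule borel_measurable_continuous_onI) (intro continuous_intros)

lemma S_LS_alt: "S_LS \<Lambda> \<Sigma> x1 x2 = (sin (sqrt (\<Sigma> / (4 * \<Lambda>)) * norm (x1 - x2)) / norm (x1 - x2)) *\<^sub>R (x2 - x1)"
  by (simp add: S_LS_def)

lemma cd_sq:
  assumes "\<Sigma> > 0"
  shows "(cone_dist \<Lambda> \<Sigma> p q)^2 = 4 / \<Sigma> * ((snd p)^2 + (snd q)^2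
     - 2 * snd p * snd q * cos (min (sqrt (\<Sigma> / (4 * \<Lambda>)) * norm (fst p - fst q)) pi))"
proof -
  define c where "c = cos (min (sqrt (\<Sigma> / (4 * \<Lambda>)) * norm (fst p - fst q)) pi)"
  have "\<bar>c\<bar> \<le> 1" by (simp add: c_def)
  then have "\<bar>2 * snd p * snd q * c\<bar> \<le> 2 * \<bar>snd p\<bar> * \<bar>snd q\<bar>"
    by (simp add: abs_mult mult_left_le)
  moreover have "2 * \<bar>snd p\<bar> * \<bar>snd q\<bar> \<le> (snd p)^2 + (snd q)^2"
    using sum_squares_bound[of "\<bar>snd p\<bar>" "\<bar>snd q\<bar>"] by simp
  ultimately have "0 \<le> (snd p)^2 + (snd q)^2 - 2 * snd p * snd q * c" by linarith
  then show ?thesis using assms by (simp add: cone_dist_def c_def)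
qed

lemma cd_bound:
  assumes "\<Sigma> > 0"
  shows "(cone_dist \<Lambda> \<Sigma> p q)^2 \<le> 4 / \<Sigma> * (2 * ((snd p)^2 + (snd q)^2))"
proof -
  define c where "c = cos (min (sqrt (\<Sigma> / (4 * \<Lambda>)) * norm (fst p - fst q)) pi)"
  have "\<bar>c\<bar> \<le> 1" by (simp add: c_def)
  then have "\<bar>2 * snd p * snd q * c\<bar> \<le> 2 * \<bar>snd p\<bar> * \<bar>snd q\<bar>"
    by (simp add: abs_mult mult_left_le)
  moreover have "2 * \<bar>snd p\<bar> * \<bar>snd q\<bar> \<le> (snd p)^2 + (snd q)^2"
    using sum_squares_bound[of "\<bar>snd p\<bar>" "\<bar>snd q\<bar>"] by simp
  ultimately have "(snd p)^2 + (snd q)^2 - 2 * snd p * snd q * c \<le> 2 * (snd p)^2 + 2 * (snd q)^2" by linarith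
  then have "(snd p)^2 + (snd q)^2 - 2 * snd p * snd q * c \<le> 2 * ((snd p)^2 + (snd q)^2)" by (simp add: algebra_simps)
  then show ?thesis using assms unfolding cd_sq[OF assms] c_def[symmetric]
    by (intro mult_left_mono) auto
qed

lemma cd0_sq:
  assumes "\<Sigma> > 0"
  shows "(cone_dist \<Lambda> \<Sigma> p (0, 0))^2 = 4 / \<Sigma> * (snd p)^2"
  using cd_sq[OF assms, of \<Lambda> p "(0,0)"] by simp

lemma meas_test:
  fixes \<phi> :: "'a::{real_inner, second_countable_topology} \<Rightarrow> real" and grad :: "'a \<Rightarrow> 'a"
  assumes [measurable]: "\<phi> \<in> borel_measurable borel" "grad \<in> borel_measurable borel"
  shows "(\<lambda>pq::('a \<times> real) \<times> ('a \<times> real). (snd (snd pq))^2 * \<phi> (fst (snd pq)) + (snd (fst pq))^2 * \<phi> (fst (fst pq))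
      - 2 * snd (fst pq) * snd (snd pq) * \<phi> (fst (fst pq)) * cos (sqrt (\<Sigma> / (4 * \<Lambda>)) * norm (fst (fst pq) - fst (snd pq)))
      - snd (fst pq) * snd (snd pq) * sqrt (4 * \<Lambda> / \<Sigma>) * inner (S_LS \<Lambda> \<Sigma> (fst (fst pq)) (fst (snd pq))) (grad (fst (fst pq))))
     \<in> borel_measurable borel"
    and "(\<lambda>pq::('a \<times> real) \<times> ('a \<times> real). (cone_dist \<Lambda> \<Sigma> (fst pq) (snd pq))^2) \<in> borel_measurable borel"
  unfolding S_LS_alt cone_dist_def by measurable



theorem proposition2p5:
  fixes X :: "'a::{real_inner, complete_space, second_countable_topology} set"
    and \<Lambda> \<Sigma> :: real
    and \<phi> :: "'a \<Rightarrow> real" and grad :: "'a \<Rightarrow> 'a" and hess :: "'a \<Rightarrow> 'a \<Rightarrow>\<^sub>L 'a"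
    and \<nu>0 \<mu> :: "'a measure"
    and \<beta> :: "(('a \<times> real) \<times> ('a \<times> real)) measure"
  assumes "closed X" and "convex X"
    and "\<Lambda> > 0" and "\<Sigma> > 0"
    and "\<And>x. (\<phi> has_derivative (\<lambda>h. inner (grad x) h)) (at x)"
    and "\<And>x. (grad has_derivative blinfun_apply (hess x)) (at x)"
    and "continuous_on UNIV hess"
    and "bdd_above ((\<lambda>x. \<bar>\<phi> x\<bar> + norm (grad x) + norm (hess x)) ` X)"
    and "meas_on X \<nu>0" and "meas_on X \<mu>"
    and "HK_optimal \<Lambda> \<Sigma> X \<nu>0 \<mu> \<beta>"
  shows "\<bar>4 / \<Sigma> * ((\<integral>x. \<phi> x \<partial>\<mu>) - (\<integral>x. \<phi> x \<partial>\<nu>0))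
          - (F_functional \<Lambda> \<Sigma> \<phi> grad \<beta>
             - 8 / \<Sigma> * ((\<integral>x. \<phi> x \<partial>\<nu>0) - (\<integral>x. \<phi> x \<partial>hmap (marg1 \<beta>))))\<bar>
         \<le> C_phi X \<phi> grad hess * (6 + 16 * \<Lambda> / \<Sigma>) * HK2 \<Lambda> \<Sigma> X \<nu>0 \<mu>"
proof -
  note cl = assms(1) and cX = assms(2) and L = assms(3) and S = assms(4)
    and dphi = assms(5) and dgrad = assms(6) and bdd = assms(8)
    and mon = assms(9) and mom = assms(10) and opt = assms(11)
  define a where "a = 4 / \<Sigma>"
  define K where "K = 6 + 16 * \<Lambda> / \<Sigma>"
  define C where "C = C_phi X \<phi> grad hess"
  define \<alpha>0 where "\<alpha>0 = marg1 \<beta>"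
  define \<alpha>s where "\<alpha>s = marg2 \<beta>"
  have a0: "a > 0" using S by (simp add: a_def)
  have K1: "K \<ge> 1" using L S by (simp add: K_def)
  have sb: "sets \<beta> = sets borel" and fb: "finite_measure \<beta>"
    and M0: "cone_M2 \<Lambda> \<Sigma> X \<alpha>0" and Ms: "cone_M2 \<Lambda> \<Sigma> X \<alpha>s"
    and le0: "meas_le (hmap \<alpha>0) \<nu>0" and les: "meas_le (hmap \<alpha>s) \<mu>"
    and HKeq: "HK_cost \<Lambda> \<Sigma> X \<nu>0 \<mu> \<beta> = HK2 \<Lambda> \<Sigma> X \<nu>0 \<mu>"
    using opt unfolding HK_optimal_def HK_admissible_def \<alpha>0_def \<alpha>s_def by auto
  have spb: "space \<beta> = UNIV" using sets_eq_imp_space_eq[OF sb] by simp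
  have bnd: "\<bar>\<phi> x\<bar> + norm (grad x) + norm (hess x) \<le> C" if "x \<in> X" for x
    unfolding C_def C_phi_def using cSUP_upper[OF that bdd] .
  have bphi: "\<bar>\<phi> x\<bar> \<le> C" if "x \<in> X" for x
    using bnd[OF that] norm_ge_zero[of "grad x"] norm_ge_zero[of "hess x"] by linarith
  have contphi: "continuous_on UNIV \<phi>"
    using dphi has_derivative_continuous continuous_at_imp_continuous_on by blast
  have contgrad: "continuous_on UNIV grad"
    using dgrad has_derivative_continuous continuous_at_imp_continuous_on by blast
  have phim[measurable]: "\<phi> \<in> borel_measurable borel" by (rule borel_measurable_continuous_onI[OF contphi])
  have gradm[measurable]: "grad \<in> borel_measurable borel" by (rule borel_measurable_continuous_onI[OF contgrad])
  have Xb[measurable]: "X \<in> sets borel" using cl by (rule borel_closed)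
  have sX0: "sets \<alpha>0 = sets borel" "sets \<alpha>s = sets borel" by (simp_all add: \<alpha>0_def \<alpha>s_def marg1_def marg2_def)
  have fstb: "fst \<in> measurable \<beta> borel" using bm_cong[OF sb fst_bm] .
  have sndb: "snd \<in> measurable \<beta> borel" using bm_cong[OF sb snd_bm] .
  define Y where "Y = X \<times> {0::real..}"
  have Yb: "UNIV - Y \<in> sets borel" unfolding Y_def using cl by (intro borel_open) (auto intro!: closed_Times)
  have ae1: "AE pq in \<beta>. fst pq \<in> Y"
  proof (rule AE_I'[of "fst -` (UNIV - Y)"])
    have "emeasure \<alpha>0 (UNIV - Y) = 0" using M0 unfolding cone_M2_def cone_meas_def Y_def by simp
    then have "emeasure \<beta> (fst -` (UNIV - Y) \<inter> space \<beta>) = 0"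
      unfolding \<alpha>0_def marg1_def by (simp add: emeasure_distr[OF fstb Yb])
    moreover have "fst -` (UNIV - Y) \<in> sets \<beta>"
      using measurable_sets[OF fstb Yb] spb by simp
    ultimately show "fst -` (UNIV - Y) \<in> null_sets \<beta>" using spb by (simp add: null_sets_def)
  qed (auto simp: spb)
  have ae2: "AE pq in \<beta>. snd pq \<in> Y"
  proof (rule AE_I'[of "snd -` (UNIV - Y)"])
    have "emeasure \<alpha>s (UNIV - Y) = 0" using Ms unfolding cone_M2_def cone_meas_def Y_def by simp
    then have "emeasure \<beta> (snd -` (UNIV - Y) \<inter> space \<beta>) = 0"
      unfolding \<alpha>s_def marg2_def by (simp add: emeasure_distr[OF sndb Yb])
    moreover have "snd -` (UNIV - Y) \<in> sets \<beta>"
      using measurable_sets[OF sndb Yb] spb by simp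
    ultimately show "snd -` (UNIV - Y) \<in> null_sets \<beta>" using spb by (simp add: null_sets_def)
  qed (auto simp: spb)
  have supp: "AE pq in \<beta>. fst (fst pq) \<in> X \<and> snd (fst pq) \<ge> 0 \<and> fst (snd pq) \<in> X \<and> snd (snd pq) \<ge> 0"
    using ae1 ae2 by eventually_elim (auto simp: Y_def mem_Times_iff)
  define R1 where "R1 = (\<lambda>pq::('a \<times> real) \<times> ('a \<times> real). (snd (fst pq))^2)"
  define R2 where "R2 = (\<lambda>pq::('a \<times> real) \<times> ('a \<times> real). (snd (snd pq))^2)"
  define P1 where "P1 = (\<lambda>pq::('a \<times> real) \<times> ('a \<times> real). (snd (fst pq))^2 * \<phi> (fst (fst pq)))"
  define P2 where "P2 = (\<lambda>pq::('a \<times> real) \<times> ('a \<times> real). (snd (snd pq))^2 * \<phi> (fst (snd pq)))"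
  define D where "D = (\<lambda>pq::('a \<times> real) \<times> ('a \<times> real). (cone_dist \<Lambda> \<Sigma> (fst pq) (snd pq))^2)"
  define E where "E = (\<lambda>pq::('a \<times> real) \<times> ('a \<times> real). (snd (snd pq))^2 * \<phi> (fst (snd pq)) + (snd (fst pq))^2 * \<phi> (fst (fst pq))
      - 2 * snd (fst pq) * snd (snd pq) * \<phi> (fst (fst pq)) * cos (sqrt (\<Sigma> / (4 * \<Lambda>)) * norm (fst (fst pq) - fst (snd pq)))
      - snd (fst pq) * snd (snd pq) * sqrt (4 * \<Lambda> / \<Sigma>) * inner (S_LS \<Lambda> \<Sigma> (fst (fst pq)) (fst (snd pq))) (grad (fst (fst pq))))"
  have mE0: "E \<in> borel_measurable borel" and mD0: "D \<in> borel_measurable borel"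
    unfolding E_def D_def using meas_test[OF phim gradm] by blast+
  have mE: "E \<in> borel_measurable \<beta>" using bm_cong[OF sb mE0] .
  have mD: "D \<in> borel_measurable \<beta>" using bm_cong[OF sb mD0] .
  have mP1: "P1 \<in> borel_measurable \<beta>" by (rule bm_cong[OF sb]) (unfold P1_def, measurable)
  have mP2: "P2 \<in> borel_measurable \<beta>" by (rule bm_cong[OF sb]) (unfold P2_def, measurable)
  have int_sq: "integrable \<alpha> (\<lambda>p. (snd p)^2)" if "cone_M2 \<Lambda> \<Sigma> X \<alpha>" for \<alpha>
  proof -
    have "integrable \<alpha> (\<lambda>p. 4 / \<Sigma> * (snd p)^2)"
      using that unfolding cone_M2_def cd0_sq[OF S] by simp
    then show ?thesis using S by (subst (asm) integrable_mult_left_iff) auto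
  qed
  have iR1: "integrable \<beta> R1"
  proof -
    have "integrable (distr \<beta> borel fst) (\<lambda>p. (snd p)^2)" using int_sq[OF M0] by (simp add: \<alpha>0_def marg1_def)
    then show ?thesis unfolding R1_def using integrable_distr_eq[OF fstb, of "\<lambda>p. (snd p)^2"] by simp
  qed
  have iR2: "integrable \<beta> R2"
  proof -
    have "integrable (distr \<beta> borel snd) (\<lambda>p. (snd p)^2)" using int_sq[OF Ms] by (simp add: \<alpha>s_def marg2_def)
    then show ?thesis unfolding R2_def using integrable_distr_eq[OF sndb, of "\<lambda>p. (snd p)^2"] by simp
  qed
  have iP1: "integrable \<beta> P1"
  proof (rule Bochner_Integration.integrable_bound[OF integrable_mult_right[OF iR1, of C] mP1])
    show "AE pq in \<beta>. norm (P1 pq) \<le> norm (C * R1 pq)"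
      using supp proof eventually_elim
      case (elim pq)
      then have "\<bar>\<phi> (fst (fst pq))\<bar> \<le> C" using bphi by blast
      then have "\<bar>P1 pq\<bar> \<le> R1 pq * C" unfolding P1_def R1_def by (simp add: abs_mult mult_left_mono)
      moreover have "R1 pq * C \<le> \<bar>C * R1 pq\<bar>" unfolding R1_def
        using mult_right_mono[OF abs_ge_self[of C] zero_le_power2[of "snd (fst pq)"]] by (simp add: abs_mult mult.commute)
      ultimately show ?case by simp
    qed
  qed
  have iP2: "integrable \<beta> P2"
  proof (rule Bochner_Integration.integrable_bound[OF integrable_mult_right[OF iR2, of C] mP2])
    show "AE pq in \<beta>. norm (P2 pq) \<le> norm (C * R2 pq)"
      using supp proof eventually_elim
      case (elim pq)
      then have "\<bar>\<phi> (fst (snd pq))\<bar> \<le> C" using bphi by blast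
      then have "\<bar>P2 pq\<bar> \<le> R2 pq * C" unfolding P2_def R2_def by (simp add: abs_mult mult_left_mono)
      moreover have "R2 pq * C \<le> \<bar>C * R2 pq\<bar>" unfolding R2_def
        using mult_right_mono[OF abs_ge_self[of C] zero_le_power2[of "snd (snd pq)"]] by (simp add: abs_mult mult.commute)
      ultimately show ?case by simp
    qed
  qed
  have iD: "integrable \<beta> D"
  proof (rule Bochner_Integration.integrable_bound[OF integrable_mult_right[OF Bochner_Integration.integrable_add[OF iR1 iR2], of "4 / \<Sigma> * 2"] mD])
    show "AE pq in \<beta>. norm (D pq) \<le> norm (4 / \<Sigma> * 2 * (R1 pq + R2 pq))"
    proof (rule AE_I2)
      fix pq
      have "D pq \<le> 4 / \<Sigma> * (2 * (R1 pq + R2 pq))" unfolding D_def R1_def R2_def by (rule cd_bound[OF S])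
      moreover have D0: "D pq \<ge> 0" by (simp add: D_def)
      moreover have nn: "0 \<le> 4 / \<Sigma> * 2 * (R1 pq + R2 pq)" using S by (simp add: R1_def R2_def)
      ultimately show "norm (D pq) \<le> norm (4 / \<Sigma> * 2 * (R1 pq + R2 pq))"
        by (simp only: real_norm_def abs_of_nonneg[OF nn] abs_of_nonneg[OF D0] mult.assoc)
    qed
  qed
  have ptw: "AE pq in \<beta>. a * \<bar>E pq\<bar> \<le> C * K * D pq"
    using supp proof eventually_elim
    case (elim pq)
    then show ?case
      using pointwise[OF cX L S dphi dgrad bnd, of "fst (fst pq)" "fst (snd pq)" "snd (fst pq)" "snd (snd pq)"]
      by (simp add: E_def D_def a_def K_def)
  qed
  have iE: "integrable \<beta> E"
  proof (rule Bochner_Integration.integrable_bound[OF integrable_mult_right[OF iD, of "C * K / a"] mE])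
    show "AE pq in \<beta>. norm (E pq) \<le> norm (C * K / a * D pq)"
      using ptw proof eventually_elim
      case (elim pq)
      then have "\<bar>E pq\<bar> \<le> C * K / a * D pq" using a0 by (simp add: field_simps)
      moreover have "C * K / a * D pq \<le> \<bar>C * K / a * D pq\<bar>" by (rule abs_ge_self)
      ultimately show ?case unfolding real_norm_def by (rule order_trans)
    qed
  qed
  have hm: "(\<integral>x. \<phi> x \<partial>hmap \<alpha>) = (\<integral>p. (snd p)^2 * \<phi> (fst p) \<partial>\<alpha>)" if sa: "sets \<alpha> = sets borel" for \<alpha>
  proof -
    have fa: "fst \<in> measurable \<alpha> borel" using bm_cong[OF sa fst_bm] .
    have "(\<integral>x. \<phi> x \<partial>hmap \<alpha>) = (\<integral>p. \<phi> (fst p) \<partial>density \<alpha> (\<lambda>p. ennreal ((snd p)^2)))"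
      unfolding hmap_def by (rule integral_distr) (use fa in auto)
    also have "\<dots> = (\<integral>p. (snd p)^2 *\<^sub>R \<phi> (fst p) \<partial>\<alpha>)"
    proof (rule integral_density)
      show "(\<lambda>p. \<phi> (fst p)) \<in> borel_measurable \<alpha>" using measurable_compose[OF fa phim] .
      show "(\<lambda>p. (snd p)^2) \<in> borel_measurable \<alpha>" by (rule bm_cong[OF sa]) measurable
      show "AE p in \<alpha>. 0 \<le> (snd p)^2" by simp
    qed
    finally show ?thesis by simp
  qed
  have I0: "(\<integral>x. \<phi> x \<partial>hmap (marg1 \<beta>)) = (\<integral>pq. P1 pq \<partial>\<beta>)"
    unfolding hm[OF sX0(1)[unfolded \<alpha>0_def]] unfolding marg1_def P1_def
    by (rule integral_distr[OF fstb]) measurable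
  have Is: "(\<integral>x. \<phi> x \<partial>hmap \<alpha>s) = (\<integral>pq. P2 pq \<partial>\<beta>)"
    unfolding hm[OF sX0(2)] unfolding \<alpha>s_def marg2_def P2_def
    by (rule integral_distr[OF sndb]) measurable
  have Fi: "(case pq of ((x1, r1), (x2, r2)) \<Rightarrow>
      - 2 * r1\<^sup>2 * \<phi> x1 + 2 * r1 * r2 * \<phi> x1 * cos (sqrt (\<Sigma> / (4 * \<Lambda>)) * norm (x1 - x2))
      + r1 * r2 * sqrt (4 * \<Lambda> / \<Sigma>) * inner (S_LS \<Lambda> \<Sigma> x1 x2) (grad x1)) = P2 pq - P1 pq - E pq" for pq
    by (cases pq) (auto simp: P1_def P2_def E_def algebra_simps)
  have Fexp: "F_functional \<Lambda> \<Sigma> \<phi> grad \<beta> = a * ((\<integral>pq. P2 pq \<partial>\<beta>) - (\<integral>pq. P1 pq \<partial>\<beta>) - (\<integral>pq. E pq \<partial>\<beta>))"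
  proof -
    have "F_functional \<Lambda> \<Sigma> \<phi> grad \<beta> = a * (\<integral>pq. P2 pq - P1 pq - E pq \<partial>\<beta>)"
      unfolding F_functional_def a_def Fi ..
    also have "(\<integral>pq. P2 pq - P1 pq - E pq \<partial>\<beta>) = (\<integral>pq. P2 pq \<partial>\<beta>) - (\<integral>pq. P1 pq \<partial>\<beta>) - (\<integral>pq. E pq \<partial>\<beta>)"
      using iP1 iP2 iE by simp
    finally show ?thesis .
  qed
  have sm: "sets \<mu> = sets borel" and fm: "finite_measure \<mu>" and nm: "emeasure \<mu> (UNIV - X) = 0"
    using mom unfolding meas_on_def by auto
  have sn: "sets \<nu>0 = sets borel" and fn: "finite_measure \<nu>0" and nn: "emeasure \<nu>0 (UNIV - X) = 0"
    using mon unfolding meas_on_def by auto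
  have sh: "sets (hmap \<alpha>) = sets borel" for \<alpha> :: "('a \<times> real) measure" by (simp add: hmap_def)
  have fh: "finite_measure (hmap \<alpha>)" if le: "meas_le (hmap \<alpha>) M" and fM: "finite_measure M" for \<alpha> :: "('a \<times> real) measure" and M
  proof (rule finite_measureI)
    have "emeasure (hmap \<alpha>) UNIV \<le> emeasure M UNIV" using le unfolding meas_le_def by simp
    moreover have "emeasure M UNIV \<noteq> \<infinity>"
      using finite_measure.emeasure_finite[OF fM] by simp
    ultimately show "emeasure (hmap \<alpha>) (space (hmap \<alpha>)) \<noteq> \<infinity>"
      using sets_eq_imp_space_eq[OF sh[of \<alpha>]] by (simp add: top_unique) (metis neq_top_trans)
  qed
  have mle: "measure (hmap \<alpha>) X \<le> measure M X" if le: "meas_le (hmap \<alpha>) M" and fM: "finite_measure M" for \<alpha> :: "('a \<times> real) measure" and M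
  proof -
    have "emeasure (hmap \<alpha>) X \<le> emeasure M X" using le Xb unfolding meas_le_def by simp
    moreover have "emeasure M X < top" using finite_measure.emeasure_finite[OF fM] by (simp add: less_top)
    ultimately show ?thesis unfolding measure_def by (rule enn2real_mono)
  qed
  have dmu: "\<bar>(\<integral>x. \<phi> x \<partial>\<mu>) - (\<integral>x. \<phi> x \<partial>hmap \<alpha>s)\<bar> \<le> C * (measure \<mu> X - measure (hmap \<alpha>s) X)"
    by (rule deficit_bound[OF sm sh fm fh[OF les fm] les nm Xb phim bphi])
  have dnu: "\<bar>(\<integral>x. \<phi> x \<partial>\<nu>0) - (\<integral>x. \<phi> x \<partial>hmap (marg1 \<beta>))\<bar> \<le> C * (measure \<nu>0 X - measure (hmap (marg1 \<beta>)) X)"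
    using deficit_bound[OF sn sh fn fh[OF le0 fn] le0 nn Xb phim bphi] by (simp add: \<alpha>0_def)
  have ge_mu: "measure (hmap \<alpha>s) X \<le> measure \<mu> X" by (rule mle[OF les fm])
  have ge_nu: "measure (hmap (marg1 \<beta>)) X \<le> measure \<nu>0 X" using mle[OF le0 fn] by (simp add: \<alpha>0_def)
  have HK: "HK2 \<Lambda> \<Sigma> X \<nu>0 \<mu> = (\<integral>pq. D pq \<partial>\<beta>) + a * ((measure \<nu>0 X - measure (hmap (marg1 \<beta>)) X) + (measure \<mu> X - measure (hmap \<alpha>s) X))"
    using HKeq unfolding HK_cost_def D_def a_def \<alpha>s_def by simp
  have EB: "a * \<bar>\<integral>pq. E pq \<partial>\<beta>\<bar> \<le> C * K * (\<integral>pq. D pq \<partial>\<beta>)"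
  proof -
    have "\<bar>\<integral>pq. E pq \<partial>\<beta>\<bar> \<le> (\<integral>pq. \<bar>E pq\<bar> \<partial>\<beta>)" using integral_norm_bound[of \<beta> E] by simp
    then have "a * \<bar>\<integral>pq. E pq \<partial>\<beta>\<bar> \<le> a * (\<integral>pq. \<bar>E pq\<bar> \<partial>\<beta>)" using a0 by (intro mult_left_mono) auto
    also have "\<dots> = (\<integral>pq. a * \<bar>E pq\<bar> \<partial>\<beta>)" by simp
    also have "\<dots> \<le> (\<integral>pq. C * K * D pq \<partial>\<beta>)"
      using ptw iE iD by (intro integral_mono_AE) auto
    also have "\<dots> = C * K * (\<integral>pq. D pq \<partial>\<beta>)" by simp
    finally show ?thesis .
  qed
  define Im where "Im = (\<integral>x. \<phi> x \<partial>\<mu>)"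
  define In where "In = (\<integral>x. \<phi> x \<partial>\<nu>0)"
  define J0 where "J0 = (\<integral>pq. P1 pq \<partial>\<beta>)"
  define Js where "Js = (\<integral>pq. P2 pq \<partial>\<beta>)"
  define IE where "IE = (\<integral>pq. E pq \<partial>\<beta>)"
  define ID where "ID = (\<integral>pq. D pq \<partial>\<beta>)"
  define dm where "dm = measure \<mu> X - measure (hmap \<alpha>s) X"
  define dn where "dn = measure \<nu>0 X - measure (hmap (marg1 \<beta>)) X"
  have dm0: "dm \<ge> 0" using ge_mu by (simp add: dm_def)
  have dn0: "dn \<ge> 0" using ge_nu by (simp add: dn_def)
  have Z: "C * dm + C * dn \<ge> 0"
  proof (cases "X = {}")
    case True then show ?thesis by (simp add: dm_def dn_def)
  next
    case False
    then obtain x0 where "x0 \<in> X" by auto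
    then have "C \<ge> 0" using bphi[of x0] by linarith
    then show ?thesis using dm0 dn0 by simp
  qed
  have B1: "a * \<bar>Im - Js\<bar> \<le> a * (C * dm)"
    using dmu a0 unfolding Im_def Js_def dm_def Is by (intro mult_left_mono) auto
  have B2: "a * \<bar>In - J0\<bar> \<le> a * (C * dn)"
    using dnu a0 unfolding In_def J0_def dn_def I0 by (intro mult_left_mono) auto
  have B3: "a * \<bar>IE\<bar> \<le> C * K * ID" using EB by (simp add: IE_def ID_def)
  have KZ: "a * (C * dm + C * dn) \<le> K * (a * (C * dm + C * dn))"
  proof -
    have W0: "0 \<le> a * (C * dm + C * dn)" using a0 Z by simp
    show ?thesis using mult_right_mono[OF K1 W0] by simp
  qed
  have LHS: "4 / \<Sigma> * ((\<integral>x. \<phi> x \<partial>\<mu>) - (\<integral>x. \<phi> x \<partial>\<nu>0))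
          - (F_functional \<Lambda> \<Sigma> \<phi> grad \<beta>
             - 8 / \<Sigma> * ((\<integral>x. \<phi> x \<partial>\<nu>0) - (\<integral>x. \<phi> x \<partial>hmap (marg1 \<beta>))))
      = a * (Im - Js) + a * (In - J0) + a * IE"
    unfolding Fexp I0 using S by (simp add: a_def Im_def In_def J0_def Js_def IE_def field_simps)
  have "\<bar>a * (Im - Js) + a * (In - J0) + a * IE\<bar> \<le> a * \<bar>Im - Js\<bar> + a * \<bar>In - J0\<bar> + a * \<bar>IE\<bar>"
  proof -
    have t: "\<bar>x + y + z\<bar> \<le> \<bar>x\<bar> + \<bar>y\<bar> + \<bar>z\<bar>" for x y z :: real
      using abs_triangle_ineq[of "x + y" z] abs_triangle_ineq[of x y] by linarith
    show ?thesis using t[of "a * (Im - Js)" "a * (In - J0)" "a * IE"] a0 by (simp add: abs_mult)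
  qed
  also have "\<dots> \<le> a * (C * dm) + a * (C * dn) + C * K * ID" using B1 B2 B3 by linarith
  also have "\<dots> \<le> K * (a * (C * dm + C * dn)) + C * K * ID" using KZ by (simp add: algebra_simps)
  also have "\<dots> = C * K * (ID + a * (dn + dm))" by (simp add: algebra_simps)
  also have "\<dots> = C_phi X \<phi> grad hess * (6 + 16 * \<Lambda> / \<Sigma>) * HK2 \<Lambda> \<Sigma> X \<nu>0 \<mu>"
    unfolding HK C_def K_def ID_def dn_def dm_def by simp
  finally show ?thesis unfolding LHS .
qed


end
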